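(* For each $t\in\{0,1,\dots,T-1\}$ and $i\in\{1,\dots,N\}$, the control limits satisfy $\lim_{k\to\infty}\delta_i^{(k,t)}=\xi_i$; that is, for all sufficiently large $k$, replacement is not optimal in any state $(x,k)$ with $x<\xi_i$ at epoch $t$.
   Context: Fix integers $N\ge1$, $T\ge1$, reals $\alpha_0,\beta_0>0$, and for each $i\in\{1,\dots,N\}$ an integer failure threshold $\xi_i\ge1$ and costs $0<c_p^i<c_u^i$. $\mathbb{N}_0=\{0,1,2,\dots\}$. For real $r>0$ and $p\in(0,1)$, $NB(r,p)$ is the distribution on $\mathbb{N}_0$ with $P(n)=\frac{\Gamma(n+r)}{\Gamma(r)n!}p^r(1-p)^n$; $NB(0,p)$ is the point mass at $0$. For $t\in\{0,\dots,T\}$ let $p_t=\frac{\beta_0+Nt}{\beta_0+Nt+1}$. Let $\mathbb{I}_i(x)=1$ if $x\ge\xi_i$, else $0$; $\mathcal{A}_i(x)=\{0,1\}$ if $x<\xi_i$ and $\{1\}$ if $x\ge\xi_i$ ($a=1$: replacement, $a=0$: no action); $C_i(x,a)=a(1-\mathbb{I}_i(x))c_p^i+\mathbb{I}_i(x)c_u^i$. Define $\tilde V^{N,i}_T(x,k)=\mathbb{I}_i(x)c_u^i$ and for $t=T-1,\dots,0$: $\tilde V^{N,i}_t(x,k)=\min_{a\in\mathcal{A}_i(x)}\{C_i(x,a)+\mathbb{E}[\tilde V^{N,i}_{t+1}(x(1-a)+Z,\;k+Z+K)]\}$, where $Z\sim NB(\alpha_0+k,p_t)$ and $K\sim NB((N-1)(\alpha_0+k),p_t)$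 are independent. An action is optimal if it attains this minimum. The control limit $\delta_i^{(k,t)}\in\{1,\dots,\xi_i\}$ is the (unique) integer such that, for every $x\in\mathbb{N}_0$, the action $a=1$ is optimal in state $(x,k)$ at epoch $t$ iff $x\ge\delta_i^{(k,t)}$ (its existence is a result of the paper). *)

theory Defs
  imports "HOL-Analysis.Analysis"
begin

definition nbpmf :: "real \<Rightarrow> real \<Rightarrow> nat \<Rightarrow> real" where
  "nbpmf r p n = (if r = 0 then (if n = 0 then 1 else 0)
     else Gamma (real n + r) / (Gamma r * fact n) * p powr r * (1 - p) ^ n)"

definition pt :: "nat \<Rightarrow> real \<Rightarrow> nat \<Rightarrow> real" where
  "pt N \<beta>0 t = (\<beta>0 + real N * real t) / (\<beta>0 + real N * real t + 1)"

definition Ind :: "nat \<Rightarrow> nat \<Rightarrow> real" where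
  "Ind \<xi> x = (if x \<ge> \<xi> then 1 else 0)"

definition Acts :: "nat \<Rightarrow> nat \<Rightarrow> nat set" where
  "Acts \<xi> x = (if x < \<xi> then {0, 1} else {1})"

definition Cst :: "nat \<Rightarrow> real \<Rightarrow> real \<Rightarrow> nat \<Rightarrow> nat \<Rightarrow> real" where
  "Cst \<xi> cp cu x a = real a * (1 - Ind \<xi> x) * cp + Ind \<xi> x * cu"

definition expnext :: "nat \<Rightarrow> real \<Rightarrow> real \<Rightarrow> nat \<Rightarrow> (nat \<Rightarrow> nat \<Rightarrow> real) \<Rightarrow> nat \<Rightarrow> nat \<Rightarrow> real" where
  "expnext N \<alpha>0 \<beta>0 t W y k =
     infsum (\<lambda>(z, m). nbpmf (\<alpha>0 + real k) (pt N \<beta>0 t) z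
                     * nbpmf ((real N - 1) * (\<alpha>0 + real k)) (pt N \<beta>0 t) m
                     * W (y + z) (k + z + m)) (UNIV :: (nat \<times> nat) set)"

text \<open>Value function indexed by the number n of remaining epochs (epoch t = T - n).\<close>
primrec Wv :: "nat \<Rightarrow> nat \<Rightarrow> real \<Rightarrow> real \<Rightarrow> nat \<Rightarrow> real \<Rightarrow> real \<Rightarrow> nat \<Rightarrow> nat \<Rightarrow> nat \<Rightarrow> real" where
  "Wv N T \<alpha>0 \<beta>0 \<xi> cp cu 0 x k = Ind \<xi> x * cu"
| "Wv N T \<alpha>0 \<beta>0 \<xi> cp cu (Suc n) x k =
     Min ((\<lambda>a. Cst \<xi> cp cu x a
               + expnext N \<alpha>0 \<beta>0 (T - Suc n) (Wv N T \<alpha>0 \<beta>0 \<xi> cp cu n) (x * (1 - a)) k)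
          ` Acts \<xi> x)"

definition Vt :: "nat \<Rightarrow> nat \<Rightarrow> real \<Rightarrow> real \<Rightarrow> nat \<Rightarrow> real \<Rightarrow> real \<Rightarrow> nat \<Rightarrow> nat \<Rightarrow> nat \<Rightarrow> real" where
  "Vt N T \<alpha>0 \<beta>0 \<xi> cp cu t x k = Wv N T \<alpha>0 \<beta>0 \<xi> cp cu (T - t) x k"

definition Qv :: "nat \<Rightarrow> nat \<Rightarrow> real \<Rightarrow> real \<Rightarrow> nat \<Rightarrow> real \<Rightarrow> real \<Rightarrow> nat \<Rightarrow> nat \<Rightarrow> nat \<Rightarrow> nat \<Rightarrow> real" where
  "Qv N T \<alpha>0 \<beta>0 \<xi> cp cu t a x k =
     Cst \<xi> cp cu x a + expnext N \<alpha>0 \<beta>0 t (Vt N T \<alpha>0 \<beta>0 \<xi> cp cu (Suc t)) (x * (1 - a)) k"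

definition optimal :: "nat \<Rightarrow> nat \<Rightarrow> real \<Rightarrow> real \<Rightarrow> nat \<Rightarrow> real \<Rightarrow> real \<Rightarrow> nat \<Rightarrow> nat \<Rightarrow> nat \<Rightarrow> nat \<Rightarrow> bool" where
  "optimal N T \<alpha>0 \<beta>0 \<xi> cp cu t a x k \<longleftrightarrow>
     a \<in> Acts \<xi> x \<and> (\<forall>b \<in> Acts \<xi> x. Qv N T \<alpha>0 \<beta>0 \<xi> cp cu t a x k \<le> Qv N T \<alpha>0 \<beta>0 \<xi> cp cu t b x k)"

definition ctrl_limit :: "nat \<Rightarrow> nat \<Rightarrow> real \<Rightarrow> real \<Rightarrow> nat \<Rightarrow> real \<Rightarrow> real \<Rightarrow> nat \<Rightarrow> nat \<Rightarrow> nat" where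
  "ctrl_limit N T \<alpha>0 \<beta>0 \<xi> cp cu k t =
     (THE d. d \<in> {1..\<xi>} \<and> (\<forall>x. optimal N T \<alpha>0 \<beta>0 \<xi> cp cu t 1 x k \<longleftrightarrow> x \<ge> d))"

end

theory Submission imports Defs "HOL-Real_Asymp.Real_Asymp" begin


lemma nb_nonneg:
  assumes "0 \<le> r" "0 < p" "p < 1"
  shows "0 \<le> nbpmf r p n"
proof (cases "r = 0")
  case False
  then have "r > 0" using assms by simp
  then have "Gamma (real n + r) > 0" "Gamma r > 0" by (auto intro!: Gamma_real_pos)
  then show ?thesis using assms False unfolding nbpmf_def by (auto intro!: mult_nonneg_nonneg divide_nonneg_pos)
qed (simp add: nbpmf_def)

lemma nb_alt:
  assumes "0 < r"
  shows "nbpmf r p n = pochhammer r n / fact n * (1 - p) ^ n * p powr r"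
proof -
  have "r \<notin> \<int>\<^sub>\<le>\<^sub>0" using assms by (auto elim!: nonpos_Ints_cases)
  then have "pochhammer r n = Gamma (r + real n) / Gamma r" by (rule pochhammer_Gamma)
  then show ?thesis using assms unfolding nbpmf_def by (simp add: field_simps add.commute)
qed

lemma nb_has_sum:
  assumes "0 \<le> r" "0 < p" "p < 1"
  shows "(nbpmf r p has_sum 1) UNIV"
proof (cases "r = 0")
  case True
  then show ?thesis
    by (intro has_sum_finite_neutralI[of "{0}"]) (auto simp: nbpmf_def)
next
  case False
  then have r: "r > 0" using assms by simp
  have "\<bar>-(1-p)\<bar> < 1" using assms by simp
  from gen_binomial_real[OF this, of "-r"]
  have "(\<lambda>n. ((-r) gchoose n) * (-(1-p)) ^ n) sums (1 + -(1-p)) powr (-r)" .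
  then have "(\<lambda>n. ((-r) gchoose n) * (-(1-p)) ^ n * p powr r) sums ((1 + -(1-p)) powr (-r) * p powr r)"
    by (rule sums_mult2)
  moreover have "(1 + -(1-p)) powr (-r) * p powr r = 1"
    using assms by (simp add: powr_minus field_simps)
  moreover have "((-r) gchoose n) * (-(1-p)) ^ n * p powr r = nbpmf r p n" for n
  proof -
    have "((-r) gchoose n) * (-(1-p)) ^ n = pochhammer r n / fact n * (1 - p) ^ n"
    proof -
      have e: "(-1::real)^n * (-1)^n = 1" by (simp flip: power_add)
      have a: "((-r) gchoose n) = (-1)^n * pochhammer r n / fact n"
        by (simp add: gbinomial_pochhammer)
      have b: "(-(1-p::real)) ^ n = (-1)^n * (1-p)^n"
        by (rule power_minus)
      have "((-r) gchoose n) * (-(1-p::real)) ^ n = ((-1)^n * (-1)^n) * (pochhammer r n / fact n * (1 - p) ^ n)"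
        unfolding a b by (simp add: divide_inverse mult_ac)
      then show ?thesis by (simp only: e mult_1)
    qed
    then show ?thesis using nb_alt[OF r] by simp
  qed
  ultimately have "nbpmf r p sums 1" by simp
  then show ?thesis by (rule sums_nonneg_imp_has_sum) (use nb_nonneg assms in auto)
qed

lemma has_sum_prod_nonneg:
  fixes a b :: "nat \<Rightarrow> real"
  assumes "(a has_sum A) UNIV" "(b has_sum B) UNIV" "\<And>z. a z \<ge> 0" "\<And>m. b m \<ge> 0"
  shows "((\<lambda>(z,m). a z * b m) has_sum (A * B)) UNIV"
proof -
  have inner: "((\<lambda>m. (\<lambda>(z,m). a z * b m) (z, m)) has_sum (a z * B)) UNIV" for z
    using has_sum_cmult_right[OF assms(2), of "a z"] by simp
  have outer: "((\<lambda>z. a z * B) has_sum (A * B)) UNIV"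
    using has_sum_cmult_left[OF assms(1)] by simp
  have summ: "(\<lambda>(z,m). a z * b m) summable_on Sigma UNIV (\<lambda>_. UNIV)"
    by (rule summable_on_SigmaI[OF inner]) (use outer assms in \<open>auto simp: has_sum_imp_summable\<close>)
  have "((\<lambda>(z,m). a z * b m) has_sum (A * B)) (Sigma UNIV (\<lambda>_. UNIV))"
    by (rule has_sum_SigmaI[OF inner outer summ])
  then show ?thesis by simp
qed

lemma pochhammer_le:
  assumes "0 \<le> a"
  shows "pochhammer a n \<le> (a + real n) ^ n"
proof -
  have "pochhammer a n = (\<Prod>i\<in>{0..<n}. a + real i)" by (simp add: pochhammer_prod)
  also have "\<dots> \<le> (\<Prod>i\<in>{0..<n}. a + real n)"
    by (intro prod_mono) (use assms in auto)
  also have "\<dots> = (a + real n) ^ n" by simp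
  finally show ?thesis .
qed

lemma nb_tendsto0:
  assumes "0 < a" "0 < p" "p < 1"
  shows "((\<lambda>k::nat. nbpmf (a + real k) p z) \<longlongrightarrow> 0) sequentially"
proof (rule tendsto_sandwich[of "\<lambda>_. 0" _ _ "\<lambda>k. ((a + real k + real z) ^ z * p powr (a + real k)) * ((1 - p) ^ z / fact z)"])
  show "\<forall>\<^sub>F k in sequentially. 0 \<le> nbpmf (a + real k) p z"
    using nb_nonneg assms by auto
  show "\<forall>\<^sub>F k in sequentially. nbpmf (a + real k) p z \<le> ((a + real k + real z) ^ z * p powr (a + real k)) * ((1 - p) ^ z / fact z)"
  proof (intro always_eventually allI)
    fix k
    have pos: "a + real k > 0" using assms by simp
    have "nbpmf (a + real k) p z = pochhammer (a + real k) z * ((1 - p) ^ z / fact z * p powr (a + real k))"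
      by (simp add: nb_alt[OF pos])
    also have "\<dots> \<le> (a + real k + real z) ^ z * ((1 - p) ^ z / fact z * p powr (a + real k))"
      by (intro mult_right_mono pochhammer_le) (use assms in auto)
    finally show "nbpmf (a + real k) p z \<le> ((a + real k + real z) ^ z * p powr (a + real k)) * ((1 - p) ^ z / fact z)"
      by (simp add: mult_ac)
  qed
  have "((\<lambda>k::nat. (a + real k + real z) ^ z * p powr (a + real k)) \<longlongrightarrow> 0) sequentially"
    using assms by real_asymp
  then show "((\<lambda>k. ((a + real k + real z) ^ z * p powr (a + real k)) * ((1 - p) ^ z / fact z)) \<longlongrightarrow> 0) sequentially"
    by (rule tendsto_mult_left_zero)
qed simp



lemma pt_bounds: assumes "\<beta>0 > 0" shows "0 < pt N \<beta>0 t" "pt N \<beta>0 t < 1"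
  using assms unfolding pt_def by (auto simp: field_simps add_pos_nonneg)

lemma F_has_sum:
  assumes "N \<ge> 1" "\<alpha>0 > 0" "\<beta>0 > 0"
  shows "((\<lambda>(z,m). nbpmf (\<alpha>0 + real k) (pt N \<beta>0 t) z * nbpmf ((real N - 1) * (\<alpha>0 + real k)) (pt N \<beta>0 t) m) has_sum 1) UNIV"
proof -
  have r2: "0 \<le> (real N - 1) * (\<alpha>0 + real k)" using assms by simp
  show ?thesis
    using has_sum_prod_nonneg[OF nb_has_sum nb_has_sum, of "\<alpha>0 + real k" "pt N \<beta>0 t" "(real N - 1) * (\<alpha>0 + real k)" "pt N \<beta>0 t"]
      assms pt_bounds[OF assms(3)] r2 nb_nonneg by auto
qed

lemma expnext_bounds:
  assumes "N \<ge> 1" "\<alpha>0 > 0" "\<beta>0 > 0" and W: "\<And>y k. 0 \<le> W y k \<and> W y k \<le> B"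
  shows "0 \<le> expnext N \<alpha>0 \<beta>0 t W y k \<and> expnext N \<alpha>0 \<beta>0 t W y k \<le> B"
proof -
  define a where "a = nbpmf (\<alpha>0 + real k) (pt N \<beta>0 t)"
  define b where "b = nbpmf ((real N - 1) * (\<alpha>0 + real k)) (pt N \<beta>0 t)"
  have a0: "a z \<ge> 0" for z unfolding a_def using assms pt_bounds[OF assms(3)] by (intro nb_nonneg) auto
  have b0: "b z \<ge> 0" for z unfolding b_def using assms pt_bounds[OF assms(3)] by (intro nb_nonneg) auto
  have F: "((\<lambda>(z,m). a z * b m) has_sum 1) UNIV" unfolding a_def b_def by (rule F_has_sum[OF assms(1-3)])
  have BF: "((\<lambda>(z,m). B * (a z * b m)) has_sum B) UNIV"
  proof -
    have "(\<lambda>(z,m). B * (a z * b m)) = (\<lambda>zm. B * (\<lambda>(z,m). a z * b m) zm)" by (auto simp: fun_eq_iff)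
    then show ?thesis using has_sum_cmult_right[OF F, of B] by simp
  qed
  define g where "g = (\<lambda>(z,m). a z * b m * W (y + z) (k + z + m))"
  have g0: "g zm \<ge> 0" for zm unfolding g_def using a0 b0 W by (auto simp: case_prod_beta)
  have gle: "g zm \<le> (\<lambda>(z,m). B * (a z * b m)) zm" for zm
  proof -
    have "a (fst zm) * b (snd zm) * W (y + fst zm) (k + fst zm + snd zm) \<le> a (fst zm) * b (snd zm) * B"
      by (intro mult_left_mono) (use a0 b0 W in auto)
    then show ?thesis unfolding g_def by (simp add: case_prod_beta mult_ac)
  qed
  have gs: "g summable_on UNIV"
    by (rule summable_on_comparison_test[OF has_sum_imp_summable[OF BF]]) (use g0 gle in auto)
  have e: "expnext N \<alpha>0 \<beta>0 t W y k = infsum g UNIV"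
    unfolding expnext_def g_def a_def b_def ..
  have "infsum g UNIV \<le> B"
    using has_sum_mono[OF has_sum_infsum[OF gs] BF] gle by auto
  moreover have "infsum g UNIV \<ge> 0" by (rule infsum_nonneg) (use g0 in auto)
  ultimately show ?thesis using e by simp
qed

lemma Wv_bounds:
  assumes "N \<ge> 1" "\<alpha>0 > 0" "\<beta>0 > 0" "0 \<le> cp" "cp \<le> cu"
  shows "0 \<le> Wv N T \<alpha>0 \<beta>0 \<xi> cp cu n x k \<and> Wv N T \<alpha>0 \<beta>0 \<xi> cp cu n x k \<le> real (Suc n) * cu"
proof (induction n arbitrary: x k)
  case 0
  then show ?case using assms by (simp add: Ind_def)
next
  case (Suc n)
  let ?W = "Wv N T \<alpha>0 \<beta>0 \<xi> cp cu n"
  have EB: "0 \<le> expnext N \<alpha>0 \<beta>0 (T - Suc n) ?W y k' \<and> expnext N \<alpha>0 \<beta>0 (T - Suc n) ?W y k' \<le> real (Suc n) * cu" for y k'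
    by (rule expnext_bounds[OF assms(1-3)]) (use Suc.IH in auto)
  let ?f = "\<lambda>a. Cst \<xi> cp cu x a + expnext N \<alpha>0 \<beta>0 (T - Suc n) ?W (x * (1 - a)) k"
  have fin: "finite (Acts \<xi> x)" "Acts \<xi> x \<noteq> {}" "1 \<in> Acts \<xi> x" by (auto simp: Acts_def)
  have Cst0: "a \<in> Acts \<xi> x \<Longrightarrow> 0 \<le> Cst \<xi> cp cu x a" for a
    using assms by (auto simp: Cst_def Ind_def Acts_def)
  have Cst1: "Cst \<xi> cp cu x 1 \<le> cu" using assms by (auto simp: Cst_def Ind_def)
  have lo: "0 \<le> Min (?f ` Acts \<xi> x)"
    using fin Cst0 EB by (subst Min_ge_iff) (auto intro!: add_nonneg_nonneg)
  have "Min (?f ` Acts \<xi> x) \<le> ?f 1" using fin by (intro Min_le finite_imageI imageI)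
  also have "\<dots> \<le> cu + real (Suc n) * cu" using Cst1 EB by (intro add_mono) auto
  finally show ?case using lo by (simp add: algebra_simps)
qed

lemma Wv_above:
  assumes "\<xi> \<le> y"
  shows "Wv N T \<alpha>0 \<beta>0 \<xi> cp cu n y k = Wv N T \<alpha>0 \<beta>0 \<xi> cp cu n \<xi> k"
  using assms by (cases n) (auto simp: Ind_def Acts_def Cst_def)

lemma key_ineq:
  assumes "N \<ge> 1" "\<alpha>0 > 0" "\<beta>0 > 0" and W: "\<And>y k. 0 \<le> W y k \<and> W y k \<le> B"
    and Wa: "\<And>y k. \<xi> \<le> y \<Longrightarrow> W y k = W \<xi> k"
  shows "expnext N \<alpha>0 \<beta>0 t W x k \<le> expnext N \<alpha>0 \<beta>0 t W 0 k + B * (\<Sum>z<\<xi>. nbpmf (\<alpha>0 + real k) (pt N \<beta>0 t) z)"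
proof -
  define a where "a = nbpmf (\<alpha>0 + real k) (pt N \<beta>0 t)"
  define b where "b = nbpmf ((real N - 1) * (\<alpha>0 + real k)) (pt N \<beta>0 t)"
  have a0: "a z \<ge> 0" for z unfolding a_def using assms pt_bounds[OF assms(3)] by (intro nb_nonneg) auto
  have b0: "b z \<ge> 0" for z unfolding b_def using assms pt_bounds[OF assms(3)] by (intro nb_nonneg) auto
  have bs: "(b has_sum 1) UNIV" unfolding b_def
    using assms pt_bounds[OF assms(3)] by (intro nb_has_sum) auto
  define a' where "a' = (\<lambda>z. if z < \<xi> then a z else 0)"
  have a's: "(a' has_sum (\<Sum>z<\<xi>. a z)) UNIV"
    by (rule has_sum_finite_neutralI[of "{..<\<xi>}"]) (auto simp: a'_def)
  have H: "((\<lambda>(z,m). a' z * b m) has_sum ((\<Sum>z<\<xi>. a z) * 1)) UNIV"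
    by (rule has_sum_prod_nonneg[OF a's bs]) (use a0 b0 in \<open>auto simp: a'_def\<close>)
  have F: "((\<lambda>(z,m). a z * b m) has_sum 1) UNIV" unfolding a_def b_def by (rule F_has_sum[OF assms(1-3)])
  define g1 where "g1 = (\<lambda>(z,m). a z * b m * W (x + z) (k + z + m))"
  define g2 where "g2 = (\<lambda>(z,m). a z * b m * W (0 + z) (k + z + m))"
  have BF: "((\<lambda>(z,m). B * (a z * b m)) has_sum B) UNIV"
  proof -
    have "(\<lambda>(z,m). B * (a z * b m)) = (\<lambda>zm. B * (\<lambda>(z,m). a z * b m) zm)" by (auto simp: fun_eq_iff)
    then show ?thesis using has_sum_cmult_right[OF F, of B] by simp
  qed
  have gs: "g summable_on UNIV" if "g = (\<lambda>(z,m). a z * b m * W (y + z) (k + z + m))" for g y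
  proof (rule summable_on_comparison_test[OF has_sum_imp_summable[OF BF]])
    show "g zm \<le> (\<lambda>(z,m). B * (a z * b m)) zm" for zm
    proof -
      have "a (fst zm) * b (snd zm) * W (y + fst zm) (k + fst zm + snd zm) \<le> a (fst zm) * b (snd zm) * B"
        by (intro mult_left_mono) (use a0 b0 W in auto)
      then show ?thesis unfolding that by (simp add: case_prod_beta mult_ac)
    qed
    show "0 \<le> g zm" for zm unfolding that using a0 b0 W by (auto simp: case_prod_beta)
  qed
  have e1: "expnext N \<alpha>0 \<beta>0 t W x k = infsum g1 UNIV"
    unfolding expnext_def g1_def a_def b_def ..
  have e2: "expnext N \<alpha>0 \<beta>0 t W 0 k = infsum g2 UNIV"
    unfolding expnext_def g2_def a_def b_def ..
  have R: "((\<lambda>zm. g2 zm + B * (\<lambda>(z,m). a' z * b m) zm) has_sum (infsum g2 UNIV + B * (\<Sum>z<\<xi>. a z))) UNIV"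
    using has_sum_add[OF has_sum_infsum[OF gs[OF g2_def]] has_sum_cmult_right[OF H, of B]] by simp
  have pt: "g1 zm \<le> g2 zm + B * (\<lambda>(z,m). a' z * b m) zm" for zm
  proof -
    obtain z m where zm: "zm = (z, m)" by (cases zm)
    show ?thesis
    proof (cases "z < \<xi>")
      case True
      have "a z * b m * W (x + z) (k + z + m) \<le> a z * b m * B"
        using W a0 b0 by (intro mult_left_mono) auto
      moreover have "0 \<le> a z * b m * W z (k + z + m)" using W a0 b0 by auto
      ultimately show ?thesis using True by (simp add: zm g1_def g2_def a'_def mult_ac)
    next
      case False
      then have "W (x + z) (k + z + m) = W z (k + z + m)" using Wa[of "x+z"] Wa[of z] by simp
      then show ?thesis using False by (simp add: zm g1_def g2_def a'_def)
    qed
  qed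
  have "infsum g1 UNIV \<le> infsum g2 UNIV + B * (\<Sum>z<\<xi>. a z)"
    by (rule has_sum_mono[OF has_sum_infsum[OF gs[OF g1_def]] R]) (use pt in auto)
  then show ?thesis using e1 e2 by (simp add: a_def)
qed



theorem proposition3:
  fixes N T :: nat and \<alpha>0 \<beta>0 :: real
    and \<xi> :: "nat \<Rightarrow> nat" and cp cu :: "nat \<Rightarrow> real"
  assumes "N \<ge> 1" "T \<ge> 1" "\<alpha>0 > 0" "\<beta>0 > 0"
    and "\<forall>i\<in>{1..N}. \<xi> i \<ge> 1 \<and> 0 < cp i \<and> cp i < cu i"
    and "t < T" and "i \<in> {1..N}"
  shows "(\<lambda>k. ctrl_limit N T \<alpha>0 \<beta>0 (\<xi> i) (cp i) (cu i) k t) \<longlonglongrightarrow> \<xi> i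
    \<and> (\<forall>\<^sub>F k in sequentially. \<forall>x < \<xi> i. \<not> optimal N T \<alpha>0 \<beta>0 (\<xi> i) (cp i) (cu i) t 1 x k)"
proof -
  define X where "X = \<xi> i"
  define c1 where "c1 = cp i"
  define c2 where "c2 = cu i"
  have X1: "X \<ge> 1" and c1: "0 < c1" and c12: "c1 < c2"
    using assms(5,7) by (auto simp: X_def c1_def c2_def)
  define p where "p = pt N \<beta>0 t"
  have p: "0 < p" "p < 1" unfolding p_def using pt_bounds[OF assms(4)] by auto
  define W where "W = Wv N T \<alpha>0 \<beta>0 X c1 c2 (T - Suc t)"
  define B where "B = real (Suc (T - Suc t)) * c2"
  have B: "B > 0" using c1 c12 by (simp add: B_def)
  have Wb: "0 \<le> W y k \<and> W y k \<le> B" for y k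
    unfolding W_def B_def by (rule Wv_bounds) (use assms c1 c12 in auto)
  have VW: "Vt N T \<alpha>0 \<beta>0 X c1 c2 (Suc t) = W" by (simp add: fun_eq_iff Vt_def W_def)
  have Wa: "X \<le> y \<Longrightarrow> W y k = W X k" for y k unfolding W_def by (rule Wv_above)
  define S where "S = (\<lambda>k::nat. \<Sum>z<X. nbpmf (\<alpha>0 + real k) p z)"
  have "S \<longlonglongrightarrow> 0" unfolding S_def
    by (intro tendsto_null_sum nb_tendsto0) (use assms p in auto)
  then have ev: "\<forall>\<^sub>F k in sequentially. S k < c1 / B"
    by (rule order_tendstoD(2)) (use c1 B in simp)
  have notopt: "\<not> optimal N T \<alpha>0 \<beta>0 X c1 c2 t 1 x k" if Sk: "S k < c1 / B" and x: "x < X" for k x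
  proof -
    have "expnext N \<alpha>0 \<beta>0 t W x k \<le> expnext N \<alpha>0 \<beta>0 t W 0 k + B * S k"
      unfolding S_def p_def by (rule key_ineq[where W=W and B=B and \<xi>=X, OF assms(1,3,4)]) (rule Wb, erule Wa)
    moreover have "B * S k < c1" using Sk B by (simp add: field_simps)
    ultimately have lt: "expnext N \<alpha>0 \<beta>0 t W x k < c1 + expnext N \<alpha>0 \<beta>0 t W 0 k" by simp
    have q1: "Qv N T \<alpha>0 \<beta>0 X c1 c2 t 1 x k = c1 + expnext N \<alpha>0 \<beta>0 t W 0 k"
      using x by (simp add: Qv_def VW Cst_def Ind_def)
    have q0: "Qv N T \<alpha>0 \<beta>0 X c1 c2 t 0 x k = expnext N \<alpha>0 \<beta>0 t W x k"
      using x by (simp add: Qv_def VW Cst_def Ind_def)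
    have "0 \<in> Acts X x" using x by (simp add: Acts_def)
    then show ?thesis using lt q0 q1 unfolding optimal_def by force
  qed
  have opt: "optimal N T \<alpha>0 \<beta>0 X c1 c2 t 1 x k" if "X \<le> x" for x k
    using that by (simp add: optimal_def Acts_def)
  have ctrl: "ctrl_limit N T \<alpha>0 \<beta>0 X c1 c2 k t = X" if Sk: "S k < c1 / B" for k
  proof -
    have iff: "optimal N T \<alpha>0 \<beta>0 X c1 c2 t 1 x k \<longleftrightarrow> x \<ge> X" for x
      using opt notopt[OF Sk] by (meson not_le)
    show ?thesis unfolding ctrl_limit_def
    proof (rule the_equality)
      show "X \<in> {1..X} \<and> (\<forall>x. optimal N T \<alpha>0 \<beta>0 X c1 c2 t 1 x k \<longleftrightarrow> X \<le> x)"
        using X1 iff by auto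
    next
      fix d assume "d \<in> {1..X} \<and> (\<forall>x. optimal N T \<alpha>0 \<beta>0 X c1 c2 t 1 x k \<longleftrightarrow> d \<le> x)"
      then have "\<forall>x. X \<le> x \<longleftrightarrow> d \<le> x" using iff by auto
      then show "d = X" by (metis le_antisym order_refl)
    qed
  qed
  have "(\<lambda>k. ctrl_limit N T \<alpha>0 \<beta>0 X c1 c2 k t) \<longlonglongrightarrow> X"
    by (rule tendsto_eventually) (use ev ctrl in \<open>auto elim: eventually_mono\<close>)
  moreover have "\<forall>\<^sub>F k in sequentially. \<forall>x < X. \<not> optimal N T \<alpha>0 \<beta>0 X c1 c2 t 1 x k"
    using ev by (rule eventually_mono) (use notopt in blast)
  ultimately show ?thesis by (simp add: X_def c1_def c2_def)
qed


end
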